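(* Let $d\ge1$, $n\ge2$ be integers, $\kappa_d$ the volume of the $d$-dimensional unit ball, $V\ge0$, $-d/2<\tau_1<\dots<\tau_n$ reals, $x_i=\tau_i+d/2$, and let $\Sigma_n$ have entries $\frac{Vd\kappa_d}{2(x_i+x_j)}$, with eigenvalues $\lambda_1\le\dots\le\lambda_n$. Put $Q=\sum_{l=1}^n\sum_{k=1}^n\frac{n}{(x_k+x_l)^2}-\Big(\sum_{i=1}^n\frac{1}{2x_i}\Big)^2$ and $$\bar S_n=\frac{Vd\kappa_d\Big(\sum_{i=1}^n\frac1{2x_i}+\sqrt{(n-1)Q}\Big)}{2n},\qquad \underline S_n=\frac{Vd\kappa_d\prod_{1\le i<j\le n}(x_i-x_j)^2}{2\prod_{1\le i,j\le n}(x_i+x_j)\Big(\frac{\sum_{i=1}^n\frac{\sqrt{n-1}}{2x_i}+\sqrt Q}{n\sqrt{n-1}}\Big)^{n-1}}.$$ Then $\underline S_n\le\lambda_1\le\dots\le\lambda_n\le\bar S_n$.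
   Context: $\Sigma_n$ is the asymptotic covariance matrix of normalized length power functionals in the subcritical regime. *)

theory Defs
  imports "HOL-Analysis.Ball_Volume" "Jordan_Normal_Form.Char_Poly"
begin

(* Sigma_n as an n x n real matrix (indices 0..n-1), entries V d kappa_d / (2 (x_i + x_j)),
   x_i = tau_i + d/2, kappa_d = unit_ball_vol d (volume of the d-dimensional unit ball). *)
definition Sigma_mat :: "nat \<Rightarrow> nat \<Rightarrow> real \<Rightarrow> (nat \<Rightarrow> real) \<Rightarrow> real mat" where
  "Sigma_mat d n V \<tau> = mat n n (\<lambda>(i,j).
      V * real d * unit_ball_vol (real d) / (2 * ((\<tau> i + real d / 2) + (\<tau> j + real d / 2))))"

end

theory Submission
  imports Defs
begin

definition fm :: "nat \<Rightarrow> (nat \<Rightarrow> nat \<Rightarrow> real) \<Rightarrow> real mat" where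
  "fm n a = mat n n (\<lambda>(i,j). a i j)"
definition qf :: "nat \<Rightarrow> (nat \<Rightarrow> nat \<Rightarrow> real) \<Rightarrow> (nat \<Rightarrow> real) \<Rightarrow> real" where
  "qf n a y = (\<Sum>i<n. \<Sum>j<n. a i j * y i * y j)"
definition psd :: "nat \<Rightarrow> (nat \<Rightarrow> nat \<Rightarrow> real) \<Rightarrow> bool" where
  "psd n a \<longleftrightarrow> (\<forall>y. 0 \<le> qf n a y)"
definition symm :: "nat \<Rightarrow> (nat \<Rightarrow> nat \<Rightarrow> real) \<Rightarrow> bool" where
  "symm n a \<longleftrightarrow> (\<forall>i<n. \<forall>j<n. a i j = a j i)"
definition schur :: "(nat \<Rightarrow> nat \<Rightarrow> real) \<Rightarrow> nat \<Rightarrow> nat \<Rightarrow> real" where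
  "schur a i j = a (Suc i) (Suc j) - a (Suc i) 0 * a 0 (Suc j) / a 0 0"

lemma fm_carrier[simp]: "fm n a \<in> carrier_mat n n"
  and fm_dim[simp]: "dim_row (fm n a) = n" "dim_col (fm n a) = n"
  and fm_index[simp]: "i < n \<Longrightarrow> j < n \<Longrightarrow> fm n a $$ (i,j) = a i j"
  by (auto simp: fm_def)

lemma fm_mult_index:
  assumes "i < n" "j < n"
  shows "(fm n a * fm n b) $$ (i,j) = (\<Sum>k<n. a i k * b k j)"
  using assms by (simp add: scalar_prod_def lessThan_atLeast0)

lemma schur_det:
  assumes a0: "a 0 0 \<noteq> 0"
  shows "det (fm (Suc n) a) = a 0 0 * det (fm n (schur a))"
proof -
  define e where "e i k = (if i = k then 1 else 0) - (if k = 0 \<and> i \<noteq> 0 then a i 0 / a 0 0 else 0)"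
    for i k :: nat
  define E where "E = fm (Suc n) e"
  have "det E = prod_list (diag_mat E)"
    by (rule det_lower_triangular[of "Suc n"]) (auto simp: E_def e_def)
  also have "diag_mat E = map (\<lambda>i. 1) [0..<Suc n]"
    by (auto simp: diag_mat_def E_def e_def)
  also have "prod_list \<dots> = 1" by (induct n) auto
  finally have detE: "det E = 1" .
  define M where "M = E * fm (Suc n) a"
  have Mij: "M $$ (i,j) = a i j - (if i \<noteq> 0 then a i 0 / a 0 0 * a 0 j else 0)"
    if "i < Suc n" "j < Suc n" for i j
  proof -
    have "M $$ (i,j) = (\<Sum>k<Suc n. e i k * a k j)"
      unfolding M_def E_def using that by (rule fm_mult_index)
    also have "\<dots> = (\<Sum>k<Suc n. (if i = k then a k j else 0) - (if k = 0 \<and> i \<noteq> 0 then a i 0 / a 0 0 * a k j else 0))"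
      by (rule sum.cong) (auto simp: e_def)
    also have "\<dots> = a i j - (if i \<noteq> 0 then a i 0 / a 0 0 * a 0 j else 0)"
      using that by (simp add: sum_subtractf)
    finally show ?thesis .
  qed
  have M: "M \<in> carrier_mat (Suc n) (Suc n)" unfolding M_def E_def by (rule mult_carrier_mat) auto
  have "det M = det E * det (fm (Suc n) a)" unfolding M_def E_def
    by (rule det_mult) auto
  hence "det (fm (Suc n) a) = det M" using detE by simp
  also have "det M = (\<Sum>i<Suc n. M $$ (i,0) * cofactor M i 0)"
    by (rule laplace_expansion_column[OF M]) simp
  also have "\<dots> = M $$ (0,0) * cofactor M 0 0"
    by (subst sum.lessThan_Suc_shift) (simp add: Mij a0)
  also have "M $$ (0,0) = a 0 0" by (simp add: Mij)
  also have "cofactor M 0 0 = det (mat_delete M 0 0)" by (simp add: cofactor_def)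
  also have "mat_delete M 0 0 = fm n (schur a)"
    by (rule eq_matI) (use M in \<open>auto simp: mat_delete_def Mij schur_def\<close>)
  finally show ?thesis .
qed

lemma qf_Suc:
  "qf (Suc n) a y = a 0 0 * y 0 * y 0 + y 0 * (\<Sum>j<n. a 0 (Suc j) * y (Suc j))
     + y 0 * (\<Sum>i<n. a (Suc i) 0 * y (Suc i)) + qf n (\<lambda>i j. a (Suc i) (Suc j)) (\<lambda>i. y (Suc i))"
  unfolding qf_def sum.lessThan_Suc_shift
  by (simp add: sum.distrib sum_distrib_left algebra_simps)

lemma qf_schur:
  assumes s: "symm (Suc n) a" and a0: "a 0 0 \<noteq> 0"
  shows "qf (Suc n) a y = a 0 0 * (y 0 + (\<Sum>j<n. a 0 (Suc j) * y (Suc j)) / a 0 0)\<^sup>2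
           + qf n (schur a) (\<lambda>i. y (Suc i))"
proof -
  define L where "L = (\<Sum>j<n. a 0 (Suc j) * y (Suc j))"
  have L': "(\<Sum>i<n. a (Suc i) 0 * y (Suc i)) = L"
    unfolding L_def by (rule sum.cong) (use s in \<open>auto simp: symm_def\<close>)
  have "qf n (schur a) (\<lambda>i. y (Suc i)) = qf n (\<lambda>i j. a (Suc i) (Suc j)) (\<lambda>i. y (Suc i))
      - (\<Sum>i<n. \<Sum>j<n. (a (Suc i) 0 * y (Suc i)) * (a 0 (Suc j) * y (Suc j)) / a 0 0)"
    unfolding qf_def schur_def by (simp add: sum_subtractf algebra_simps)
  also have "(\<Sum>i<n. \<Sum>j<n. (a (Suc i) 0 * y (Suc i)) * (a 0 (Suc j) * y (Suc j)) / a 0 0)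
      = (\<Sum>i<n. a (Suc i) 0 * y (Suc i)) * L / a 0 0"
    unfolding L_def by (simp only: sum_product sum_divide_distrib)
  finally have "qf n (schur a) (\<lambda>i. y (Suc i)) = qf n (\<lambda>i j. a (Suc i) (Suc j)) (\<lambda>i. y (Suc i)) - L * L / a 0 0"
    using L' by simp
  moreover have "a 0 0 * (y 0 + L / a 0 0)\<^sup>2 = a 0 0 * y 0 * y 0 + 2 * y 0 * L + L * L / a 0 0"
    using a0 by (simp add: power2_eq_square field_simps)
  ultimately show ?thesis unfolding qf_Suc L' L_def[symmetric] by simp
qed

lemma psd_schur:
  assumes p: "psd (Suc n) a" and s: "symm (Suc n) a" and a0: "a 0 0 \<noteq> 0"
  shows "psd n (schur a)" "symm n (schur a)"
proof -
  show "psd n (schur a)" unfolding psd_def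
  proof
    fix y :: "nat \<Rightarrow> real"
    define z where "z = case_nat (- (\<Sum>j<n. a 0 (Suc j) * y j) / a 0 0) y"
    have "0 \<le> qf (Suc n) a z" using p by (simp add: psd_def)
    also have "\<dots> = qf n (schur a) y"
      unfolding qf_schur[OF s a0] by (simp add: z_def)
    finally show "0 \<le> qf n (schur a) y" .
  qed
  show "symm n (schur a)" using s by (auto simp: symm_def schur_def)
qed

lemma qf_unit: assumes "i < n" shows "qf n a (\<lambda>k. if k = i then 1 else 0) = a i i"
proof -
  have "qf n a (\<lambda>k. if k = i then 1 else 0) = (\<Sum>k<n. \<Sum>l<n. if k = i then (if l = i then a k l else 0) else 0)"
    unfolding qf_def by (intro sum.cong) auto
  also have "\<dots> = (\<Sum>k<n. if k = i then (\<Sum>l<n. if l = i then a k l else 0) else 0)"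
    by (intro sum.cong) auto
  also have "\<dots> = a i i" using assms by simp
  finally show ?thesis .
qed

lemma psd_diag: "psd n a \<Longrightarrow> i < n \<Longrightarrow> 0 \<le> a i i"
  using qf_unit[of i n a] by (metis psd_def)

lemma sum_two:
  fixes n p q :: nat and f :: "nat \<Rightarrow> real"
  assumes "p < n" "q < n" "p \<noteq> q" "\<And>k. k \<noteq> p \<Longrightarrow> k \<noteq> q \<Longrightarrow> f k = 0"
  shows "(\<Sum>k<n. f k) = f p + f q"
proof -
  have "(\<Sum>k<n. f k) = (\<Sum>k\<in>{p,q}. f k)"
    by (rule sum.mono_neutral_right) (auto simp: assms(1,2) intro: assms(4))
  also have "\<dots> = f p + f q" using assms by simp
  finally show ?thesis .
qed

lemma qf_two:
  assumes "p < n" "q < n" "p \<noteq> q"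
  shows "qf n a (\<lambda>k. if k = p then s else if k = q then t else 0)
     = s * s * a p p + s * t * (a p q + a q p) + t * t * a q q"
proof -
  let ?y = "\<lambda>k. if k = p then s else if k = q then t else 0"
  have inner: "(\<Sum>l<n. a k l * ?y k * ?y l) = a k p * ?y k * s + a k q * ?y k * t" for k
    by (subst sum_two[OF assms]) (use assms in auto)
  have "qf n a ?y = (\<Sum>k<n. a k p * ?y k * s + a k q * ?y k * t)"
    unfolding qf_def inner ..
  also have "\<dots> = (a p p * s * s + a p q * s * t) + (a q p * t * s + a q q * t * t)"
    by (subst sum_two[OF assms]) (use assms in auto)
  finally show ?thesis by (simp add: algebra_simps)
qed

lemma psd_zero_row:
  assumes p: "psd n a" and a0: "a 0 0 = 0" and j: "j < n" and s: "symm n a"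
  shows "a 0 j = 0"
proof (rule ccontr)
  assume h: "a 0 j \<noteq> 0"
  then have j0: "j \<noteq> 0" using a0 by metis
  have n: "0 < n" using j by auto
  define t where "t = - (a j j + 1) / (2 * a 0 j)"
  have "0 \<le> qf n a (\<lambda>k. if k = 0 then t else if k = j then 1 else 0)"
    using p by (simp add: psd_def)
  also have "\<dots> = t * t * a 0 0 + t * 1 * (a 0 j + a j 0) + 1 * 1 * a j j"
    by (rule qf_two) (use n j j0 in auto)
  also have "\<dots> = -1" using a0 s j n h by (simp add: symm_def t_def field_simps)
  finally show False by simp
qed

lemma hadamard: "psd n a \<Longrightarrow> symm n a \<Longrightarrow> det (fm n a) \<le> (\<Prod>i<n. a i i)"
proof (induct n arbitrary: a)
  case 0
  then show ?case by (simp add: det_dim_zero[OF fm_carrier])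
next
  case (Suc n)
  have p: "psd (Suc n) a" and s: "symm (Suc n) a" by fact+
  have diag: "0 \<le> a i i" if "i < Suc n" for i using psd_diag[OF p that] .
  show ?case
  proof (cases "a 0 0 = 0")
    case True
    have row: "a 0 j = 0" if "j < Suc n" for j using psd_zero_row[OF p True that s] .
    have "det (fm (Suc n) a) = (\<Sum>j<Suc n. fm (Suc n) a $$ (0,j) * cofactor (fm (Suc n) a) 0 j)"
      by (rule laplace_expansion_row) auto
    also have "\<dots> = 0" by (intro sum.neutral) (simp add: row)
    moreover have "0 \<le> (\<Prod>i<Suc n. a i i)" by (rule prod_nonneg) (use diag in auto)
    ultimately show ?thesis by simp
  next
    case False
    then have a0: "0 < a 0 0" using diag[of 0] by simp
    note ps = psd_schur[OF p s False]
    have "det (fm (Suc n) a) = a 0 0 * det (fm n (schur a))" by (rule schur_det[of a n, OF False])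
    also have "\<dots> \<le> a 0 0 * (\<Prod>i<n. schur a i i)"
      using Suc.hyps[OF ps] a0 by simp
    also have "(\<Prod>i<n. schur a i i) \<le> (\<Prod>i<n. a (Suc i) (Suc i))"
    proof (rule prod_mono)
      fix i assume i: "i \<in> {..<n}"
      have "schur a i i = a (Suc i) (Suc i) - (a 0 (Suc i))\<^sup>2 / a 0 0"
        using s i by (simp add: schur_def symm_def power2_eq_square)
      moreover have "0 \<le> (a 0 (Suc i))\<^sup>2 / a 0 0" using a0 by simp
      moreover have "0 \<le> schur a i i" using psd_diag[OF ps(1)] i by auto
      ultimately show "0 \<le> schur a i i \<and> schur a i i \<le> a (Suc i) (Suc i)"
        by linarith
    qed
    then have "a 0 0 * (\<Prod>i<n. schur a i i) \<le> a 0 0 * (\<Prod>i<n. a (Suc i) (Suc i))"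
      using a0 by simp
    also have "\<dots> = (\<Prod>i<Suc n. a i i)" by (simp only: prod.lessThan_Suc_shift)
    finally show ?thesis by simp
  qed
qed

lemma prod_le_amgm:
  fixes x :: "nat \<Rightarrow> real"
  assumes "0 < n" "\<And>i. i < n \<Longrightarrow> 0 \<le> x i"
  shows "(\<Prod>i<n. x i) \<le> ((\<Sum>i<n. x i) / n) ^ n"
proof -
  have S: "0 \<le> (\<Sum>i<n. x i) / n" using assms by (intro divide_nonneg_nonneg sum_nonneg) auto
  have P: "0 \<le> (\<Prod>i<n. x i)" using assms by (intro prod_nonneg) auto
  have am: "(\<Prod>i<n. x i) powr (1 / n) \<le> (\<Sum>i<n. x i / n)"
    using arith_geom_mean[of "{..<n}" x] assms by auto
  show ?thesis
  proof (cases "(\<Prod>i<n. x i) = 0")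
    case True show ?thesis unfolding True using S by simp
  next
    case False
    then have Pp: "0 < (\<Prod>i<n. x i)" using P by linarith
    have "((\<Prod>i<n. x i) powr (1 / n)) ^ n = ((\<Prod>i<n. x i) powr (1 / n)) powr (real n)"
      by (rule powr_realpow[symmetric]) (simp only: powr_gt_zero, use Pp in linarith)
    also have "\<dots> = (\<Prod>i<n. x i) powr (1 / n * n)" by (simp add: powr_powr)
    also have "\<dots> = (\<Prod>i<n. x i)" using assms(1) Pp by simp
    finally have "(\<Prod>i<n. x i) = ((\<Prod>i<n. x i) powr (1 / n)) ^ n" by simp
    also have "\<dots> \<le> ((\<Sum>i<n. x i) / n) ^ n"
      by (rule power_mono) (use am in \<open>simp_all add: sum_divide_distrib\<close>)
    finally show ?thesis .
  qed
qed

lemma det_amgm: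
  assumes "psd n a" "symm n a" "0 < n"
  shows "det (fm n a) \<le> ((\<Sum>i<n. a i i) / n) ^ n"
  using hadamard[OF assms(1,2)] prod_le_amgm[OF assms(3), of "\<lambda>i. a i i"] psd_diag[OF assms(1)]
  by fastforce

definition dl :: "nat \<Rightarrow> nat \<Rightarrow> real" where "dl i j = (if i = j then 1 else 0)"

lemma dl_sum_left[simp]: "i < n \<Longrightarrow> (\<Sum>k<n. dl i k * f k) = f i"
proof -
  assume i: "i < n"
  have "(\<Sum>k<n. dl i k * f k) = (\<Sum>k<n. if k = i then f k else 0)"
    by (rule sum.cong) (auto simp: dl_def)
  also have "\<dots> = f i" using i by simp
  finally show ?thesis .
qed

lemma dl_sum_right[simp]: "i < n \<Longrightarrow> (\<Sum>k<n. f k * dl k i) = f i"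
proof -
  assume i: "i < n"
  have "(\<Sum>k<n. f k * dl k i) = (\<Sum>k<n. if k = i then f k else 0)"
    by (rule sum.cong) (auto simp: dl_def)
  also have "\<dots> = f i" using i by simp
  finally show ?thesis .
qed

lemma dl_sym: "dl i j = dl j i" by (auto simp: dl_def)

lemma householder:
  fixes u :: "nat \<Rightarrow> real"
  assumes n: "0 < n" and u: "(\<Sum>i<n. (u i)\<^sup>2) = 1"
  shows "\<exists>h. symm n h \<and> (\<forall>i<n. \<forall>j<n. (\<Sum>k<n. h i k * h k j) = dl i j) \<and> (\<forall>l<n. h l 0 = u l)"
proof -
  define z where "z i = u i - dl i 0" for i
  define s where "s = (\<Sum>i<n. (z i)\<^sup>2)"
  have "s = (\<Sum>i<n. (u i)\<^sup>2 - 2 * (dl 0 i * u i) + dl 0 i * dl 0 i)"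
    unfolding s_def z_def by (rule sum.cong) (auto simp: dl_def power2_eq_square algebra_simps)
  also have "\<dots> = 2 - 2 * u 0"
    using n u dl_sum_left[OF n, of u] dl_sum_left[OF n, of "dl 0"]
    by (simp add: sum.distrib sum_subtractf sum_distrib_left[symmetric] dl_def[of 0 0])
  finally have s2: "s = 2 - 2 * u 0" .
  show ?thesis
  proof (cases "s = 0")
    case True
    have "z i = 0" if "i < n" for i
    proof -
      have "(\<Sum>i<n. (z i)\<^sup>2) = 0" using True s_def by simp
      then have "\<forall>i\<in>{..<n}. (z i)\<^sup>2 = 0" by (subst (asm) sum_nonneg_eq_0_iff) auto
      then show ?thesis using that by simp
    qed
    then have ul: "u l = dl l 0" if "l < n" for l using that by (simp add: z_def)
    show ?thesis
      by (rule exI[of _ dl]) (auto simp: symm_def dl_sym ul)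
  next
    case False
    define h where "h i j = dl i j - 2 * z i * z j / s" for i j
    have H2: "(\<Sum>k<n. h i k * h k j) = dl i j" if ij: "i < n" "j < n" for i j
    proof -
      have "(\<Sum>k<n. h i k * h k j) = (\<Sum>k<n. dl i k * dl k j - dl i k * (2 * z k * z j / s)
          - (2 * z i * z k / s) * dl k j + (4 * z i * z j / s\<^sup>2) * (z k)\<^sup>2)"
        by (rule sum.cong) (auto simp: h_def algebra_simps power2_eq_square)
      also have "\<dots> = dl i j - 2 * z i * z j / s - 2 * z i * z j / s + (4 * z i * z j / s\<^sup>2) * s"
      proof -
        have e1: "(\<Sum>k<n. dl i k * dl k j) = dl i j" by (rule dl_sum_left[OF ij(1)])
        have e2: "(\<Sum>k<n. dl i k * (2 * z k * z j / s)) = 2 * z i * z j / s"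
          by (rule dl_sum_left[OF ij(1)])
        have e3: "(\<Sum>k<n. (2 * z i * z k / s) * dl k j) = 2 * z i * z j / s"
          by (rule dl_sum_right[OF ij(2)])
        have e4: "(\<Sum>k<n. (4 * z i * z j / s\<^sup>2) * (z k)\<^sup>2) = (4 * z i * z j / s\<^sup>2) * s"
          by (simp add: s_def sum_distrib_left)
        show ?thesis unfolding sum.distrib sum_subtractf e1 e2 e3 e4 ..
      qed
      also have "\<dots> = dl i j" using False by (simp add: field_simps power2_eq_square)
      finally show ?thesis .
    qed
    have H3: "h l 0 = u l" if "l < n" for l
    proof -
      have z0: "z 0 = u 0 - 1" by (simp add: z_def dl_def)
      have "h l 0 = dl l 0 - 2 * z l * (u 0 - 1) / (2 - 2 * u 0)" by (simp add: h_def z0 s2)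
      also have "\<dots> = dl l 0 + z l" using False s2 by (simp add: field_simps)
      finally show ?thesis by (simp add: z_def)
    qed
    show ?thesis
    proof (rule exI[of _ h], intro conjI allI impI)
      show "symm n h" by (auto simp: symm_def h_def dl_sym)
    qed (use H2 H3 in auto)
  qed
qed

lemma det_col0:
  assumes c0: "\<And>i. 0 < i \<Longrightarrow> i < Suc m \<Longrightarrow> c i 0 = 0"
  shows "det (fm (Suc m) c) = c 0 0 * det (fm m (\<lambda>i j. c (Suc i) (Suc j)))"
proof -
  let ?M = "fm (Suc m) c"
  have "det ?M = (\<Sum>i<Suc m. ?M $$ (i,0) * cofactor ?M i 0)"
    by (rule laplace_expansion_column) auto
  also have "\<dots> = ?M $$ (0,0) * cofactor ?M 0 0"
    by (subst sum.lessThan_Suc_shift) (simp add: c0)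
  also have "cofactor ?M 0 0 = det (mat_delete ?M 0 0)" by (simp add: cofactor_def)
  also have "mat_delete ?M 0 0 = fm m (\<lambda>i j. c (Suc i) (Suc j))"
    by (rule eq_matI) (auto simp: mat_delete_def)
  finally show ?thesis by simp
qed

lemma sum4_swap:
  fixes F :: "nat \<Rightarrow> nat \<Rightarrow> nat \<Rightarrow> nat \<Rightarrow> real"
  shows "(\<Sum>i<n. \<Sum>j<n. \<Sum>k<n. \<Sum>l<n. F i j k l) = (\<Sum>k<n. \<Sum>l<n. \<Sum>i<n. \<Sum>j<n. F i j k l)"
proof -
  have "(\<Sum>i<n. \<Sum>j<n. \<Sum>k<n. \<Sum>l<n. F i j k l) = (\<Sum>i<n. \<Sum>k<n. \<Sum>l<n. \<Sum>j<n. F i j k l)"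
  proof (rule sum.cong[OF refl])
    fix i
    have "(\<Sum>j<n. \<Sum>k<n. \<Sum>l<n. F i j k l) = (\<Sum>k<n. \<Sum>j<n. \<Sum>l<n. F i j k l)"
      by (rule sum.swap)
    also have "\<dots> = (\<Sum>k<n. \<Sum>l<n. \<Sum>j<n. F i j k l)"
      by (rule sum.cong[OF refl], rule sum.swap)
    finally show "(\<Sum>j<n. \<Sum>k<n. \<Sum>l<n. F i j k l) = (\<Sum>k<n. \<Sum>l<n. \<Sum>j<n. F i j k l)" .
  qed
  also have "\<dots> = (\<Sum>k<n. \<Sum>i<n. \<Sum>l<n. \<Sum>j<n. F i j k l)" by (rule sum.swap)
  also have "\<dots> = (\<Sum>k<n. \<Sum>l<n. \<Sum>i<n. \<Sum>j<n. F i j k l)"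
    by (rule sum.cong[OF refl], rule sum.swap)
  finally show ?thesis .
qed

lemma qf_conj:
  assumes h: "symm n h"
  shows "qf n (\<lambda>i j. \<Sum>k<n. \<Sum>l<n. h i k * a k l * h l j) y = qf n a (\<lambda>k. \<Sum>i<n. h k i * y i)"
proof -
  have "qf n (\<lambda>i j. \<Sum>k<n. \<Sum>l<n. h i k * a k l * h l j) y
      = (\<Sum>i<n. \<Sum>j<n. \<Sum>k<n. \<Sum>l<n. h i k * a k l * h l j * y i * y j)"
    unfolding qf_def by (simp add: sum_distrib_right)
  also have "\<dots> = (\<Sum>k<n. \<Sum>l<n. \<Sum>i<n. \<Sum>j<n. h i k * a k l * h l j * y i * y j)"
    by (rule sum4_swap)
  also have "\<dots> = qf n a (\<lambda>k. \<Sum>i<n. h k i * y i)"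
    unfolding qf_def
  proof (intro sum.cong refl)
    fix k l assume kl: "k \<in> {..<n}" "l \<in> {..<n}"
    have "a k l * (\<Sum>i<n. h k i * y i) * (\<Sum>j<n. h l j * y j)
        = (\<Sum>i<n. a k l * (h k i * y i)) * (\<Sum>j<n. h l j * y j)"
      by (simp add: sum_distrib_left)
    also have "\<dots> = (\<Sum>i<n. \<Sum>j<n. a k l * (h k i * y i) * (h l j * y j))"
      by (rule sum_product)
    also have "\<dots> = (\<Sum>i<n. \<Sum>j<n. h i k * a k l * h l j * y i * y j)"
      by (intro sum.cong refl) (use h kl in \<open>auto simp: symm_def\<close>)
    finally show "(\<Sum>i<n. \<Sum>j<n. h i k * a k l * h l j * y i * y j)
        = a k l * (\<Sum>i<n. h k i * y i) * (\<Sum>i<n. h l i * y i)" by simp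
  qed
  finally show ?thesis .
qed

lemma eig_det_bound:
  fixes a :: "nat \<Rightarrow> nat \<Rightarrow> real" and w :: "nat \<Rightarrow> real" and m :: nat
  assumes p: "psd (Suc m) a" and s: "symm (Suc m) a" and m: "0 < m"
    and ev: "\<And>i. i < Suc m \<Longrightarrow> (\<Sum>j<Suc m. a i j * w j) = \<mu> * w i"
    and nz: "\<exists>i<Suc m. w i \<noteq> 0"
  shows "0 \<le> \<mu> \<and> \<mu> \<le> (\<Sum>i<Suc m. a i i)
     \<and> det (fm (Suc m) a) \<le> \<mu> * (((\<Sum>i<Suc m. a i i) - \<mu>) / m) ^ m"
proof -
  define n where "n = Suc m"
  have n: "0 < n" by (simp add: n_def)
  obtain i0 where i0: "i0 < n" "w i0 \<noteq> 0" using nz n_def by auto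
  have "(w i0)\<^sup>2 \<le> (\<Sum>i<n. (w i)\<^sup>2)"
    by (rule member_le_sum) (use i0 in auto)
  then have W: "0 < (\<Sum>i<n. (w i)\<^sup>2)" using i0 by (smt (verit) zero_less_power2)
  define r where "r = sqrt (\<Sum>i<n. (w i)\<^sup>2)"
  have r: "0 < r" using W by (simp add: r_def)
  have r2: "r\<^sup>2 = (\<Sum>i<n. (w i)\<^sup>2)" using W by (simp add: r_def)
  define u where "u i = w i / r" for i
  have u1: "(\<Sum>i<n. (u i)\<^sup>2) = 1"
    using r r2 W by (simp add: u_def power_divide sum_divide_distrib[symmetric])
  have evu: "(\<Sum>j<n. a i j * u j) = \<mu> * u i" if "i < n" for i
  proof -
    have "(\<Sum>j<n. a i j * u j) = (\<Sum>j<n. a i j * w j) / r"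
      by (simp add: u_def sum_divide_distrib)
    also have "\<dots> = \<mu> * u i" using ev[of i] that by (simp add: n_def u_def)
    finally show ?thesis .
  qed
  obtain h where hs: "symm n h" and hh: "\<forall>i<n. \<forall>j<n. (\<Sum>k<n. h i k * h k j) = dl i j"
    and h0: "\<forall>l<n. h l 0 = u l"
    using householder[OF n u1] by blast
  have hsym: "h i j = h j i" if "i < n" "j < n" for i j using hs that by (simp add: symm_def)
  have asym: "a i j = a j i" if "i < n" "j < n" for i j using s that by (simp add: symm_def n_def)
  define c where "c i j = (\<Sum>k<n. \<Sum>l<n. h i k * a k l * h l j)" for i j
  have HA: "fm n h * fm n a = fm n (\<lambda>i l. \<Sum>k<n. h i k * a k l)"
    by (rule eq_matI) (auto simp: scalar_prod_def lessThan_atLeast0)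
  have C: "fm n c = fm n h * fm n a * fm n h"
    unfolding HA
  proof (rule eq_matI)
    fix i j assume ij: "i < dim_row (fm n (\<lambda>i l. \<Sum>k<n. h i k * a k l) * fm n h)"
      "j < dim_col (fm n (\<lambda>i l. \<Sum>k<n. h i k * a k l) * fm n h)"
    then have ij': "i < n" "j < n" by auto
    have "(fm n (\<lambda>i l. \<Sum>k<n. h i k * a k l) * fm n h) $$ (i,j)
        = (\<Sum>l<n. (\<Sum>k<n. h i k * a k l) * h l j)" by (rule fm_mult_index[OF ij'])
    also have "\<dots> = (\<Sum>l<n. \<Sum>k<n. h i k * a k l * h l j)" by (simp add: sum_distrib_right)
    also have "\<dots> = c i j" unfolding c_def by (rule sum.swap)
    finally show "fm n c $$ (i, j) = (fm n (\<lambda>i l. \<Sum>k<n. h i k * a k l) * fm n h) $$ (i, j)"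
      using ij' by simp
  qed auto
  have HH: "fm n h * fm n h = 1\<^sub>m n"
  proof -
    have e: "(fm n h * fm n h) $$ (i,j) = dl i j" if "i < n" "j < n" for i j
      using fm_mult_index[OF that, of h h] hh that by simp
    show ?thesis by (rule eq_matI) (auto simp: e dl_def simp del: index_mult_mat(1))
  qed
  have "det (fm n h) * det (fm n h) = 1"
    using det_mult[OF fm_carrier fm_carrier, of n h h] HH by simp
  have detC: "det (fm n c) = det (fm n a)"
  proof -
    have "det (fm n c) = det (fm n h * fm n a) * det (fm n h)"
      unfolding C by (rule det_mult) (auto intro: mult_carrier_mat)
    also have "\<dots> = det (fm n h) * det (fm n a) * det (fm n h)"
      by (subst det_mult) auto
    also have "\<dots> = (det (fm n h) * det (fm n h)) * det (fm n a)" by simp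
    also have "det (fm n h) * det (fm n h) = 1"
      using det_mult[OF fm_carrier fm_carrier, of n h h] HH by simp
    finally show ?thesis by simp
  qed
  have col0: "c i 0 = \<mu> * dl i 0" if i: "i < n" for i
  proof -
    have "c i 0 = (\<Sum>k<n. h i k * (\<Sum>l<n. a k l * u l))"
      unfolding c_def by (intro sum.cong refl) (simp add: sum_distrib_left h0 mult.assoc)
    also have "\<dots> = (\<Sum>k<n. h i k * (\<mu> * u k))"
      by (intro sum.cong refl) (simp add: evu)
    also have "\<dots> = \<mu> * (\<Sum>k<n. h i k * h k 0)"
      unfolding sum_distrib_left by (intro sum.cong refl) (simp add: h0)
    also have "\<dots> = \<mu> * dl i 0" using hh i n by simp
    finally show ?thesis .
  qed
  have psdc: "psd n c" unfolding psd_def c_def qf_conj[OF hs] using p by (simp add: psd_def n_def)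
  have symc: "symm n c" unfolding symm_def
  proof (intro allI impI)
    fix i j assume ij: "i < n" "j < n"
    have "c j i = (\<Sum>l<n. \<Sum>k<n. h j l * a l k * h k i)" by (simp add: c_def)
    also have "\<dots> = (\<Sum>k<n. \<Sum>l<n. h j l * a l k * h k i)" by (rule sum.swap)
    also have "\<dots> = c i j" unfolding c_def
      by (intro sum.cong refl) (use ij in \<open>simp add: hsym asym\<close>)
    finally show "c i j = c j i" by simp
  qed
  have trc: "(\<Sum>i<n. c i i) = (\<Sum>i<n. a i i)"
  proof -
    have "(\<Sum>i<n. c i i) = (\<Sum>k<n. \<Sum>i<n. \<Sum>l<n. h i k * a k l * h l i)"
      unfolding c_def by (rule sum.swap)
    also have "\<dots> = (\<Sum>k<n. \<Sum>l<n. \<Sum>i<n. h i k * a k l * h l i)"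
      by (rule sum.cong[OF refl], rule sum.swap)
    also have "\<dots> = (\<Sum>k<n. \<Sum>l<n. a k l * dl l k)"
    proof (intro sum.cong refl)
      fix k l assume kl: "k \<in> {..<n}" "l \<in> {..<n}"
      have "(\<Sum>i<n. h i k * a k l * h l i) = a k l * (\<Sum>i<n. h l i * h i k)"
        by (simp add: sum_distrib_left mult_ac)
      also have "\<dots> = a k l * dl l k" using hh kl by simp
      finally show "(\<Sum>i<n. h i k * a k l * h l i) = a k l * dl l k" .
    qed
    also have "\<dots> = (\<Sum>k<n. a k k)" by simp
    finally show ?thesis .
  qed
  define b where "b = (\<lambda>i j. c (Suc i) (Suc j))"
  have detb: "det (fm n c) = \<mu> * det (fm m b)"
    unfolding n_def b_def
    by (subst det_col0) (use col0 n_def in \<open>auto simp: dl_def\<close>)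
  have c00: "c 0 0 = \<mu>" using col0[OF n] by (simp add: dl_def)
  have mu0: "0 \<le> \<mu>" using psd_diag[OF psdc n] c00 by simp
  have psdb: "psd m b" unfolding psd_def
  proof
    fix y
    have "qf m b y = qf n c (case_nat 0 y)" unfolding n_def qf_Suc by (simp add: b_def)
    then show "0 \<le> qf m b y" using psdc by (simp add: psd_def)
  qed
  have symb: "symm m b" using symc by (auto simp: symm_def b_def n_def)
  have trb: "(\<Sum>i<m. b i i) = (\<Sum>i<n. a i i) - \<mu>"
  proof -
    have "(\<Sum>i<n. c i i) = c 0 0 + (\<Sum>i<m. c (Suc i) (Suc i))"
      unfolding n_def by (rule sum.lessThan_Suc_shift)
    then show ?thesis using trc c00 unfolding b_def by simp
  qed
  have trb0: "0 \<le> (\<Sum>i<m. b i i)" by (rule sum_nonneg) (use psd_diag[OF psdb] in auto)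
  have "det (fm n a) = \<mu> * det (fm m b)" using detC detb by simp
  also have "\<dots> \<le> \<mu> * (((\<Sum>i<n. a i i) - \<mu>) / m) ^ m"
    using det_amgm[OF psdb symb m] mu0 trb by (simp add: mult_left_mono)
  finally show ?thesis using mu0 trb trb0 by (simp add: n_def)
qed

lemma normalize_eig:
  fixes a :: "nat \<Rightarrow> nat \<Rightarrow> real" and w :: "nat \<Rightarrow> real"
  assumes ev: "\<And>i. i < n \<Longrightarrow> (\<Sum>j<n. a i j * w j) = \<mu> * w i"
    and nz: "\<exists>i<n. w i \<noteq> 0"
  shows "\<exists>u. (\<Sum>i<n. (u i)\<^sup>2) = 1 \<and> (\<forall>i<n. (\<Sum>j<n. a i j * u j) = \<mu> * u i)"
proof -
  obtain i0 where i0: "i0 < n" "w i0 \<noteq> 0" using nz by auto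
  have "(w i0)\<^sup>2 \<le> (\<Sum>i<n. (w i)\<^sup>2)"
    by (rule member_le_sum) (use i0 in auto)
  then have W: "0 < (\<Sum>i<n. (w i)\<^sup>2)" using i0 by (smt (verit) zero_less_power2)
  define r where "r = sqrt (\<Sum>i<n. (w i)\<^sup>2)"
  have r: "0 < r" using W by (simp add: r_def)
  have r2: "r\<^sup>2 = (\<Sum>i<n. (w i)\<^sup>2)" using W by (simp add: r_def)
  define u where "u i = w i / r" for i
  have u1: "(\<Sum>i<n. (u i)\<^sup>2) = 1"
    using r r2 W by (simp add: u_def power_divide sum_divide_distrib[symmetric])
  have evu: "(\<Sum>j<n. a i j * u j) = \<mu> * u i" if "i < n" for i
  proof -
    have "(\<Sum>j<n. a i j * u j) = (\<Sum>j<n. a i j * w j) / r"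
      by (simp add: u_def sum_divide_distrib)
    also have "\<dots> = \<mu> * u i" using ev[of i] that by (simp add: u_def)
    finally show ?thesis .
  qed
  show ?thesis using u1 evu by blast
qed

lemma dl_sq[simp]: "dl i j * dl i j = dl i j" by (simp add: dl_def)

lemma dl_diag_sum: "(\<Sum>i<n. \<Sum>j<n. dl i j * g i j) = (\<Sum>i<n. g i i)"
  by (intro sum.cong refl) simp

lemma dl_count: "(\<Sum>i<n. \<Sum>j<n. dl i j) = real n"
  using dl_diag_sum[where g="\<lambda>i j. 1" and n=n] by simp

lemma var_bound:
  fixes a :: "nat \<Rightarrow> nat \<Rightarrow> real" and w :: "nat \<Rightarrow> real"
  assumes s: "symm n a"
    and ev: "\<And>i. i < n \<Longrightarrow> (\<Sum>j<n. a i j * w j) = \<mu> * w i"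
    and nz: "\<exists>i<n. w i \<noteq> 0"
  shows "real n * (\<mu> - (\<Sum>i<n. a i i) / n)\<^sup>2
     \<le> (real n - 1) * ((\<Sum>i<n. \<Sum>j<n. (a i j)\<^sup>2) - (\<Sum>i<n. a i i)\<^sup>2 / n)"
proof -
  obtain u where u1: "(\<Sum>i<n. (u i)\<^sup>2) = 1" and evu: "\<And>i. i < n \<Longrightarrow> (\<Sum>j<n. a i j * u j) = \<mu> * u i"
    using normalize_eig[OF ev nz] by blast
  have n: "0 < n" using nz by auto
  define T where "T = (\<Sum>i<n. a i i)"
  define F where "F = (\<Sum>i<n. \<Sum>j<n. (a i j)\<^sup>2)"
  define t where "t = T / n"
  define \<nu> where "\<nu> = \<mu> - t"
  define b where "b i j = a i j - t * dl i j" for i j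
  define M where "M i j = b i j - \<nu> * (u i * u j)" for i j
  define P where "P i j = dl i j - u i * u j" for i j
  have evb: "(\<Sum>j<n. b i j * u j) = \<nu> * u i" if i: "i < n" for i
  proof -
    have "(\<Sum>j<n. b i j * u j) = (\<Sum>j<n. a i j * u j) - t * (\<Sum>j<n. dl i j * u j)"
      by (simp add: b_def algebra_simps sum_subtractf sum_distrib_left)
    also have "(\<Sum>j<n. dl i j * u j) = u i" using i by (rule dl_sum_left)
    finally show ?thesis using i evu by (simp add: \<nu>_def algebra_simps)
  qed
  have trb: "(\<Sum>i<n. b i i) = 0"
    using n by (simp add: b_def sum_subtractf dl_def T_def t_def)
  have bq: "(\<Sum>i<n. \<Sum>j<n. b i j * (u i * u j)) = \<nu>"
  proof -
    have "(\<Sum>i<n. \<Sum>j<n. b i j * (u i * u j)) = (\<Sum>i<n. u i * (\<Sum>j<n. b i j * u j))"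
      by (simp add: sum_distrib_left mult_ac)
    also have "\<dots> = (\<Sum>i<n. \<nu> * (u i)\<^sup>2)"
      by (intro sum.cong refl) (simp add: evb power2_eq_square)
    also have "\<dots> = \<nu>" using u1 by (simp add: sum_distrib_left[symmetric])
    finally show ?thesis .
  qed
  have uq: "(\<Sum>i<n. \<Sum>j<n. (u i * u j)\<^sup>2) = 1"
  proof -
    have "(\<Sum>i<n. \<Sum>j<n. (u i * u j)\<^sup>2) = (\<Sum>i<n. (u i)\<^sup>2 * (\<Sum>j<n. (u j)\<^sup>2))"
      by (simp add: sum_distrib_left power_mult_distrib)
    also have "\<dots> = 1" using u1 by simp
    finally show ?thesis .
  qed
  have dlu: "(\<Sum>i<n. \<Sum>j<n. dl i j * (u i * u j)) = 1"
    using u1 by (simp add: dl_diag_sum power2_eq_square)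
  have SPM: "(\<Sum>i<n. \<Sum>j<n. P i j * M i j) = - \<nu>"
  proof -
    have Mu: "(\<Sum>j<n. M i j * u j) = 0" if "i < n" for i
    proof -
      have "(\<Sum>j<n. M i j * u j) = (\<Sum>j<n. b i j * u j) - \<nu> * u i * (\<Sum>j<n. (u j)\<^sup>2)"
        by (simp add: M_def algebra_simps sum_subtractf sum_distrib_left power2_eq_square)
      then show ?thesis using evb[OF that] u1 by simp
    qed
    have "(\<Sum>i<n. \<Sum>j<n. P i j * M i j) = (\<Sum>i<n. \<Sum>j<n. dl i j * M i j) - (\<Sum>i<n. u i * (\<Sum>j<n. M i j * u j))"
      by (simp add: P_def algebra_simps sum_subtractf sum_distrib_left)
    also have "(\<Sum>i<n. u i * (\<Sum>j<n. M i j * u j)) = 0" by (simp add: Mu)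
    also have "(\<Sum>i<n. \<Sum>j<n. dl i j * M i j) = (\<Sum>i<n. M i i)" by (rule dl_diag_sum)
    also have "\<dots> = (\<Sum>i<n. b i i) - \<nu> * (\<Sum>i<n. (u i)\<^sup>2)"
      by (simp add: M_def sum_subtractf sum_distrib_left power2_eq_square)
    finally show ?thesis using trb u1 by simp
  qed
  have SPP: "(\<Sum>i<n. \<Sum>j<n. (P i j)\<^sup>2) = real n - 1"
  proof -
    have "(\<Sum>i<n. \<Sum>j<n. (P i j)\<^sup>2) = (\<Sum>i<n. \<Sum>j<n. dl i j)
        - 2 * (\<Sum>i<n. \<Sum>j<n. dl i j * (u i * u j)) + (\<Sum>i<n. \<Sum>j<n. (u i * u j)\<^sup>2)"
      by (simp add: P_def power2_eq_square algebra_simps sum_subtractf sum.distrib sum_distrib_left)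
    then show ?thesis using dlu uq dl_count by simp
  qed
  have B2: "(\<Sum>i<n. \<Sum>j<n. (b i j)\<^sup>2) = F - T\<^sup>2 / n"
  proof -
    have e: "(b i j)\<^sup>2 = (a i j)\<^sup>2 - 2 * t * (dl i j * a i j) + t\<^sup>2 * dl i j" for i j
      by (simp add: b_def power2_eq_square algebra_simps)
    have "(\<Sum>i<n. \<Sum>j<n. (b i j)\<^sup>2) = (\<Sum>i<n. \<Sum>j<n. (a i j)\<^sup>2 - 2 * t * (dl i j * a i j) + t\<^sup>2 * dl i j)"
      by (simp only: e)
    also have "\<dots> = F - 2 * t * (\<Sum>i<n. \<Sum>j<n. dl i j * a i j) + t\<^sup>2 * (\<Sum>i<n. \<Sum>j<n. dl i j)"
      by (simp only: F_def sum.distrib sum_subtractf sum_distrib_left)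
    also have "(\<Sum>i<n. \<Sum>j<n. dl i j * a i j) = T" by (simp only: dl_diag_sum T_def)
    also have "(\<Sum>i<n. \<Sum>j<n. dl i j) = n" by (rule dl_count)
    finally show ?thesis using n by (simp add: t_def power2_eq_square field_simps)
  qed
  have SMM: "(\<Sum>i<n. \<Sum>j<n. (M i j)\<^sup>2) = F - T\<^sup>2 / n - \<nu>\<^sup>2"
  proof -
    have "(\<Sum>i<n. \<Sum>j<n. (M i j)\<^sup>2) = (\<Sum>i<n. \<Sum>j<n. (b i j)\<^sup>2)
        - 2 * \<nu> * (\<Sum>i<n. \<Sum>j<n. b i j * (u i * u j)) + \<nu>\<^sup>2 * (\<Sum>i<n. \<Sum>j<n. (u i * u j)\<^sup>2)"
      by (simp add: M_def power2_eq_square algebra_simps sum_subtractf sum.distrib sum_distrib_left)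
    then show ?thesis using B2 bq uq by (simp add: power2_eq_square)
  qed
  have CS: "(\<Sum>i<n. \<Sum>j<n. P i j * M i j)\<^sup>2 \<le> (\<Sum>i<n. \<Sum>j<n. (P i j)\<^sup>2) * (\<Sum>i<n. \<Sum>j<n. (M i j)\<^sup>2)"
    using Cauchy_Schwarz_ineq_sum[of "\<lambda>x. P (fst x) (snd x)" "\<lambda>x. M (fst x) (snd x)" "{..<n} \<times> {..<n}"]
    by (simp add: sum.cartesian_product case_prod_beta')
  then have "\<nu>\<^sup>2 \<le> (real n - 1) * (F - T\<^sup>2 / n - \<nu>\<^sup>2)" using SPM SPP SMM by simp
  then have "real n * \<nu>\<^sup>2 \<le> (real n - 1) * (F - T\<^sup>2 / n)" by (simp add: algebra_simps)
  then show ?thesis by (simp add: \<nu>_def t_def T_def F_def)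
qed

definition cau :: "(nat \<Rightarrow> real) \<Rightarrow> nat \<Rightarrow> nat \<Rightarrow> real" where
  "cau x i j = 1 / (x i + x j)"
definition cnum :: "nat \<Rightarrow> (nat \<Rightarrow> real) \<Rightarrow> real" where
  "cnum n x = (\<Prod>j<n. \<Prod>i<j. (x i - x j)\<^sup>2)"
definition cden :: "nat \<Rightarrow> (nat \<Rightarrow> real) \<Rightarrow> real" where
  "cden n x = (\<Prod>i<n. \<Prod>j<n. x i + x j)"

lemma qf_scale: "qf n (\<lambda>i j. d i * d j * c i j) y = qf n c (\<lambda>i. d i * y i)"
  by (simp add: qf_def mult_ac)

lemma det_scale: "det (fm n (\<lambda>i j. d i * d j * c i j)) = (\<Prod>i<n. d i)\<^sup>2 * det (fm n c)"
proof -
  have "det (fm n (\<lambda>i j. d i * d j * c i j))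
      = (\<Sum>p\<in>{p. p permutes {0..<n}}. signof p * (\<Prod>i=0..<n. d i * d (p i) * c i (p i)))"
    by (subst det_def'[OF fm_carrier]) (intro sum.cong refl, simp add: permutes_def)
  also have "\<dots> = (\<Sum>p\<in>{p. p permutes {0..<n}}. (\<Prod>i<n. d i)\<^sup>2 * (signof p * (\<Prod>i=0..<n. c i (p i))))"
  proof (intro sum.cong refl)
    fix p assume "p \<in> {p. p permutes {0..<n}}"
    then have p: "p permutes {0..<n}" by simp
    have "(\<Prod>i=0..<n. d (p i)) = (\<Prod>i=0..<n. d i)"
      using prod.permute[OF p, of d] by (simp add: comp_def)
    then show "signof p * (\<Prod>i=0..<n. d i * d (p i) * c i (p i))
        = (\<Prod>i<n. d i)\<^sup>2 * (signof p * (\<Prod>i=0..<n. c i (p i)))"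
      by (simp add: prod.distrib power2_eq_square lessThan_atLeast0)
  qed
  also have "\<dots> = (\<Prod>i<n. d i)\<^sup>2 * det (fm n c)"
    by (subst det_def'[OF fm_carrier]) (simp add: sum_distrib_left)
  finally show ?thesis .
qed

lemma fm_cong: "(\<And>i j. i < n \<Longrightarrow> j < n \<Longrightarrow> f i j = g i j) \<Longrightarrow> fm n f = fm n g"
  by (rule eq_matI) auto

lemma qf_cong: "(\<And>i j. i < n \<Longrightarrow> j < n \<Longrightarrow> f i j = g i j) \<Longrightarrow> qf n f y = qf n g y"
  unfolding qf_def by (intro sum.cong refl) auto

lemma cau_schur:
  assumes x: "\<And>i. i < Suc n \<Longrightarrow> 0 < x i" and ij: "i < n" "j < n"
  shows "schur (cau x) i j = ((x (Suc i) - x 0) / (x (Suc i) + x 0)) * ((x (Suc j) - x 0) / (x (Suc j) + x 0))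
      * cau (\<lambda>k. x (Suc k)) i j"
proof -
  have p: "0 < x 0" "0 < x (Suc i)" "0 < x (Suc j)" using x ij by auto
  then have nz: "x (Suc i) + x (Suc j) \<noteq> 0" "x (Suc i) + x 0 \<noteq> 0" "x 0 + x (Suc j) \<noteq> 0"
    "x (Suc j) + x 0 \<noteq> 0" "x 0 + x 0 \<noteq> 0" "x 0 \<noteq> 0" by auto
  show ?thesis unfolding schur_def cau_def
    by (simp add: divide_simps nz) (simp add: algebra_simps)
qed

lemma cau_symm: "symm n (cau x)" by (simp add: symm_def cau_def add.commute)

lemma cau_psd: "(\<And>i. i < n \<Longrightarrow> 0 < x i) \<Longrightarrow> psd n (cau x)"
proof (induct n arbitrary: x)
  case 0
  then show ?case by (simp add: psd_def qf_def)
next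
  case (Suc n)
  have x0: "0 < x 0" using Suc.prems by auto
  have a0: "cau x 0 0 \<noteq> 0" using x0 by (simp add: cau_def)
  define d where "d i = (x (Suc i) - x 0) / (x (Suc i) + x 0)" for i
  have IH: "psd n (cau (\<lambda>k. x (Suc k)))" by (rule Suc.hyps) (use Suc.prems in auto)
  show ?case unfolding psd_def
  proof
    fix y
    have "qf n (schur (cau x)) (\<lambda>i. y (Suc i)) = qf n (\<lambda>i j. d i * d j * cau (\<lambda>k. x (Suc k)) i j) (\<lambda>i. y (Suc i))"
      by (rule qf_cong) (simp add: cau_schur[OF Suc.prems] d_def)
    also have "\<dots> \<ge> 0" unfolding qf_scale using IH by (simp add: psd_def)
    finally have "0 \<le> qf n (schur (cau x)) (\<lambda>i. y (Suc i))" .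
    moreover have "0 \<le> cau x 0 0 * (y 0 + (\<Sum>j<n. cau x 0 (Suc j) * y (Suc j)) / cau x 0 0)\<^sup>2"
      using x0 by (simp add: cau_def)
    ultimately show "0 \<le> qf (Suc n) (cau x) y" unfolding qf_schur[OF cau_symm a0] by simp
  qed
qed

lemma cnum_Suc: "cnum (Suc n) x = (\<Prod>j<n. (x (Suc j) - x 0))\<^sup>2 * cnum n (\<lambda>k. x (Suc k))"
proof -
  have "cnum (Suc n) x = (\<Prod>j<n. \<Prod>i<Suc j. (x i - x (Suc j))\<^sup>2)"
    unfolding cnum_def by (simp add: prod.lessThan_Suc_shift del: prod.lessThan_Suc)
  also have "\<dots> = (\<Prod>j<n. (x (Suc j) - x 0)\<^sup>2 * (\<Prod>i<j. (x (Suc i) - x (Suc j))\<^sup>2))"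
    by (intro prod.cong refl) (simp add: prod.lessThan_Suc_shift power2_commute del: prod.lessThan_Suc)
  also have "\<dots> = (\<Prod>j<n. (x (Suc j) - x 0))\<^sup>2 * cnum n (\<lambda>k. x (Suc k))"
    by (simp add: prod.distrib cnum_def power_mult_distrib prod_power_distrib)
  finally show ?thesis .
qed

lemma cden_Suc: "cden (Suc n) x = 2 * x 0 * (\<Prod>j<n. (x (Suc j) + x 0))\<^sup>2 * cden n (\<lambda>k. x (Suc k))"
proof -
  have "cden (Suc n) x = (x 0 + x 0) * (\<Prod>j<n. x 0 + x (Suc j))
      * (\<Prod>i<n. (x (Suc i) + x 0) * (\<Prod>j<n. x (Suc i) + x (Suc j)))"
    unfolding cden_def by (simp add: prod.lessThan_Suc_shift del: prod.lessThan_Suc)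
  also have "\<dots> = 2 * x 0 * (\<Prod>j<n. (x (Suc j) + x 0))\<^sup>2 * cden n (\<lambda>k. x (Suc k))"
    by (simp add: prod.distrib cden_def power2_eq_square add.commute mult_ac)
  finally show ?thesis .
qed

lemma cau_det: "(\<And>i. i < n \<Longrightarrow> 0 < x i) \<Longrightarrow> det (fm n (cau x)) = cnum n x / cden n x"
proof (induct n arbitrary: x)
  case 0
  then show ?case by (simp add: cnum_def cden_def det_dim_zero[OF fm_carrier])
next
  case (Suc n)
  have x0: "0 < x 0" using Suc.prems by auto
  have a0: "cau x 0 0 \<noteq> 0" using x0 by (simp add: cau_def)
  define d where "d i = (x (Suc i) - x 0) / (x (Suc i) + x 0)" for i
  have IH: "det (fm n (cau (\<lambda>k. x (Suc k)))) = cnum n (\<lambda>k. x (Suc k)) / cden n (\<lambda>k. x (Suc k))"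
    by (rule Suc.hyps) (use Suc.prems in auto)
  have pos: "0 < x (Suc j) + x 0" if "j < n" for j using Suc.prems[of "Suc j"] Suc.prems[of 0] that by simp
  have "det (fm (Suc n) (cau x)) = cau x 0 0 * det (fm n (schur (cau x)))" by (rule schur_det[of "cau x" n, OF a0])
  also have "fm n (schur (cau x)) = fm n (\<lambda>i j. d i * d j * cau (\<lambda>k. x (Suc k)) i j)"
    by (rule fm_cong) (simp add: cau_schur[OF Suc.prems] d_def)
  also have "det \<dots> = (\<Prod>i<n. d i)\<^sup>2 * det (fm n (cau (\<lambda>k. x (Suc k))))" by (rule det_scale)
  also have "(\<Prod>i<n. d i) = (\<Prod>j<n. (x (Suc j) - x 0)) / (\<Prod>j<n. (x (Suc j) + x 0))"
    unfolding d_def by (rule prod_dividef)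
  finally have "det (fm (Suc n) (cau x)) = 1 / (2 * x 0) * ((\<Prod>j<n. (x (Suc j) - x 0)) / (\<Prod>j<n. (x (Suc j) + x 0)))\<^sup>2
      * (cnum n (\<lambda>k. x (Suc k)) / cden n (\<lambda>k. x (Suc k)))"
    unfolding IH by (simp add: cau_def[of x 0 0])
  also have "\<dots> = cnum (Suc n) x / cden (Suc n) x"
    unfolding cnum_Suc cden_Suc by (simp add: power_divide)
  finally show ?case .
qed

lemma aux_alg:
  fixes s c S q N :: real
  assumes s: "0 < s" and N: "0 < N" and Ns: "N - 1 = s\<^sup>2"
  shows "(c * S - (c * S / N - c / N * (s * q))) / s\<^sup>2 = c * ((s * S + q) / (N * s))"
proof -
  have "c * S - (c * S / N - c / N * (s * q)) = (c * S * (N - 1) + c * s * q) / N"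
    using N by (simp add: field_simps)
  also have "\<dots> = (c * S * s\<^sup>2 + c * s * q) / N" unfolding Ns ..
  also have "\<dots> / s\<^sup>2 = c * ((s * S + q) / (N * s))"
    using N s by (simp add: field_simps power2_eq_square)
  finally show ?thesis .
qed

lemma main:
  fixes x :: "nat \<Rightarrow> real" and K \<mu> :: real and n :: nat
  assumes n2: "2 \<le> n" and K: "0 \<le> K" and xp: "\<And>i. i < n \<Longrightarrow> 0 < x i"
    and eig: "eigenvalue (mat n n (\<lambda>(i,j). K / (2 * (x i + x j)))) \<mu>"
  defines "Q \<equiv> (\<Sum>l<n. \<Sum>k<n. real n / (x k + x l)\<^sup>2) - (\<Sum>i<n. 1 / (2 * x i))\<^sup>2"
  shows "K * (\<Prod>j<n. \<Prod>i<j. (x i - x j)\<^sup>2)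
                / (2 * (\<Prod>i<n. \<Prod>j<n. x i + x j)
                   * (((\<Sum>i<n. sqrt (real n - 1) / (2 * x i)) + sqrt Q) / (real n * sqrt (real n - 1))) ^ (n - 1))
         \<le> \<mu> \<and> \<mu> \<le> K * ((\<Sum>i<n. 1 / (2 * x i)) + sqrt ((real n - 1) * Q)) / (2 * real n)"
proof -
  define c where "c = K / 2"
  have c0: "0 \<le> c" using K by (simp add: c_def)
  define A where "A = (\<lambda>i j. c * cau x i j)"
  have matA: "mat n n (\<lambda>(i,j). K / (2 * (x i + x j))) = fm n A"
    by (rule eq_matI) (auto simp: fm_def A_def cau_def c_def)
  obtain v where v: "v \<in> carrier_vec n" "v \<noteq> 0\<^sub>v n" "fm n A *\<^sub>v v = \<mu> \<cdot>\<^sub>v v"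
    using eig unfolding eigenvalue_def eigenvector_def matA by auto
  define w where "w i = v $ i" for i
  have ev: "(\<Sum>j<n. A i j * w j) = \<mu> * w i" if i: "i < n" for i
  proof -
    have "(fm n A *\<^sub>v v) $ i = (\<mu> \<cdot>\<^sub>v v) $ i" using v(3) by simp
    then show ?thesis using i v(1) by (simp add: scalar_prod_def lessThan_atLeast0 w_def)
  qed
  have nz: "\<exists>i<n. w i \<noteq> 0"
  proof (rule ccontr)
    assume "\<not> (\<exists>i<n. w i \<noteq> 0)"
    then have "v = 0\<^sub>v n" using v(1) by (intro eq_vecI) (auto simp: w_def)
    then show False using v(2) by simp
  qed
  have psdA: "psd n A" unfolding psd_def
  proof
    fix y
    have "qf n A y = c * qf n (cau x) y" by (simp add: qf_def A_def sum_distrib_left mult.assoc)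
    moreover have "0 \<le> qf n (cau x) y" using cau_psd[of n x] xp by (simp add: psd_def)
    ultimately show "0 \<le> qf n A y" using c0 by simp
  qed
  have symA: "symm n A" by (simp add: symm_def A_def cau_def add.commute)
  define S1 where "S1 = (\<Sum>i<n. 1 / (2 * x i))"
  define G where "G = (\<Sum>i<n. \<Sum>j<n. 1 / (x i + x j)\<^sup>2)"
  have T: "(\<Sum>i<n. A i i) = c * S1"
    unfolding S1_def sum_distrib_left by (intro sum.cong refl) (simp add: A_def cau_def mult_2[symmetric])
  have F: "(\<Sum>i<n. \<Sum>j<n. (A i j)\<^sup>2) = c\<^sup>2 * G"
    unfolding G_def sum_distrib_left
    by (intro sum.cong refl) (simp add: A_def cau_def power_mult_distrib power_divide)
  have QG: "Q = real n * G - S1\<^sup>2"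
  proof -
    have "(\<Sum>l<n. \<Sum>k<n. real n / (x k + x l)\<^sup>2) = real n * (\<Sum>l<n. \<Sum>k<n. 1 / (x l + x k)\<^sup>2)"
      unfolding sum_distrib_left by (intro sum.cong refl) (simp add: add.commute)
    then show ?thesis unfolding Q_def G_def S1_def by simp
  qed
  have n0: "0 < real n" using n2 by simp
  have var: "real n * (\<mu> - c * S1 / n)\<^sup>2 \<le> (real n - 1) * (c\<^sup>2 * G - (c * S1)\<^sup>2 / n)"
    using var_bound[OF symA ev nz] unfolding T F .
  have var2: "(\<mu> - c * S1 / n)\<^sup>2 \<le> (c / n)\<^sup>2 * ((real n - 1) * Q)"
  proof -
    have "(real n - 1) * (c\<^sup>2 * G - (c * S1)\<^sup>2 / n) = real n * ((c / n)\<^sup>2 * ((real n - 1) * Q))"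
      using n0 unfolding QG by (simp add: field_simps power2_eq_square)
    then have "real n * (\<mu> - c * S1 / n)\<^sup>2 \<le> real n * ((c / n)\<^sup>2 * ((real n - 1) * Q))"
      using var by (simp only:)
    then show ?thesis using n0 by (rule mult_left_le_imp_le)
  qed
  have absb: "\<bar>\<mu> - c * S1 / n\<bar> \<le> c / n * sqrt ((real n - 1) * Q)"
  proof -
    have "\<bar>\<mu> - c * S1 / n\<bar> = sqrt ((\<mu> - c * S1 / n)\<^sup>2)" by simp
    also have "\<dots> \<le> sqrt ((c / n)\<^sup>2 * ((real n - 1) * Q))" using var2 by (rule real_sqrt_le_mono)
    also have "\<dots> = c / n * sqrt ((real n - 1) * Q)" using c0 n0 by (simp add: real_sqrt_mult)
    finally show ?thesis .
  qed
  have up: "\<mu> \<le> K * ((\<Sum>i<n. 1 / (2 * x i)) + sqrt ((real n - 1) * Q)) / (2 * real n)"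
  proof -
    have "\<mu> \<le> c * S1 / n + c / n * sqrt ((real n - 1) * Q)" using absb by linarith
    also have "\<dots> = K * (S1 + sqrt ((real n - 1) * Q)) / (2 * real n)"
      using n0 by (simp add: c_def field_simps)
    finally show ?thesis by (simp add: S1_def)
  qed
  obtain m where nm: "n = Suc m" and m: "0 < m" using n2 by (cases n) auto
  have edb: "0 \<le> \<mu> \<and> \<mu> \<le> (\<Sum>i<Suc m. A i i)
     \<and> det (fm (Suc m) A) \<le> \<mu> * (((\<Sum>i<Suc m. A i i) - \<mu>) / m) ^ m"
    by (rule eig_det_bound) (use psdA symA m ev nz nm in auto)
  then have mu0: "0 \<le> \<mu>" and muT: "\<mu> \<le> c * S1"
    and detb: "det (fm n A) \<le> \<mu> * ((c * S1 - \<mu>) / m) ^ m" using T nm by auto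
  define s where "s = sqrt (real n - 1)"
  have s0: "0 < s" using n2 by (simp add: s_def)
  have s2: "s\<^sup>2 = real m" using nm by (simp add: s_def)
  have sq: "sqrt ((real n - 1) * Q) = s * sqrt Q" by (simp add: s_def real_sqrt_mult)
  define b' where "b' = (s * S1 + sqrt Q) / (real n * s)"
  have sumS: "(\<Sum>i<n. sqrt (real n - 1) / (2 * x i)) = s * S1"
    unfolding S1_def sum_distrib_left s_def by simp
  have low1: "c * S1 / n - c / n * (s * sqrt Q) \<le> \<mu>" using abs_le_D2[OF absb[unfolded sq]] by linarith
  have bnd: "(c * S1 - \<mu>) / m \<le> c * b'"
  proof -
    have "(c * S1 - \<mu>) / m \<le> (c * S1 - (c * S1 / n - c / n * (s * sqrt Q))) / m"
      using low1 m by (simp add: divide_right_mono)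
    also have "\<dots> = c * b'"
    proof -
      have mm: "real m = s\<^sup>2" using s2 by simp
      have nn: "real n = s\<^sup>2 + 1" using nm s2 by simp
      have sp: "0 < s\<^sup>2 + 1" by (simp add: add_pos_nonneg add.commute)
      show ?thesis unfolding b'_def mm using aux_alg[OF s0 n0] nn by simp
    qed
    finally show ?thesis .
  qed
  have tb0: "0 \<le> (c * S1 - \<mu>) / m" using muT by simp
  have detA: "det (fm n A) = c ^ n * (cnum n x / cden n x)"
  proof -
    have "fm n A = c \<cdot>\<^sub>m fm n (cau x)" by (rule eq_matI) (auto simp: A_def)
    then show ?thesis using cau_det[of n x] xp by simp
  qed
  have main_low: "c * (cnum n x / cden n x) / b' ^ m \<le> \<mu>"
  proof (cases "c = 0")
    case True then show ?thesis using mu0 by simp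
  next
    case False
    then have cp: "0 < c" using c0 by simp
    have S1p: "0 < S1" unfolding S1_def
      by (rule sum_pos) (use xp n2 in \<open>auto simp: lessThan_empty_iff\<close>)
    have "0 \<le> (\<mu> - c * S1 / n)\<^sup>2" by simp
    then have "0 \<le> (c / n)\<^sup>2 * ((real n - 1) * Q)" using var2 by linarith
    then have "0 \<le> (real n - 1) * Q" using cp n0 by (simp add: zero_le_mult_iff)
    then have Q0: "0 \<le> Q" using n2 by (simp add: zero_le_mult_iff)
    have bp: "0 < b'" unfolding b'_def using s0 S1p Q0 n0 by (intro divide_pos_pos add_pos_nonneg) auto
    have "c ^ n * (cnum n x / cden n x) \<le> \<mu> * ((c * S1 - \<mu>) / m) ^ m" using detA detb by simp
    also have "\<dots> \<le> \<mu> * (c * b') ^ m"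
      by (rule mult_left_mono[OF power_mono[OF bnd tb0] mu0])
    finally have "c * c ^ m * (cnum n x / cden n x) \<le> c ^ m * (\<mu> * b' ^ m)"
      using nm by (simp add: power_mult_distrib mult_ac)
    then have "c ^ m * (c * (cnum n x / cden n x)) \<le> c ^ m * (\<mu> * b' ^ m)" by (simp add: mult_ac)
    then have "c * (cnum n x / cden n x) \<le> \<mu> * b' ^ m"
      by (rule mult_left_le_imp_le) (use cp in simp)
    moreover have bm: "0 < b' ^ m" using bp by simp
    ultimately show ?thesis by (subst pos_divide_le_eq[OF bm])
  qed
  have "K * (\<Prod>j<n. \<Prod>i<j. (x i - x j)\<^sup>2)
                / (2 * (\<Prod>i<n. \<Prod>j<n. x i + x j)
                   * (((\<Sum>i<n. sqrt (real n - 1) / (2 * x i)) + sqrt Q) / (real n * sqrt (real n - 1))) ^ (n - 1))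
      = c * (cnum n x / cden n x) / b' ^ m"
  proof -
    have sumS': "(\<Sum>i<n. s / (2 * x i)) = s * S1"
      unfolding S1_def sum_distrib_left by simp
    have nm1: "n - 1 = m" using nm by simp
    show ?thesis
      unfolding s_def[symmetric] sumS' cnum_def[symmetric] cden_def[symmetric] b'_def[symmetric] nm1
      by (simp add: c_def)
  qed
  with main_low up show ?thesis by simp
qed

theorem theorem6p7:
  fixes d n :: nat and V :: real and \<tau> :: "nat \<Rightarrow> real"
  assumes "d \<ge> 1" and "n \<ge> 2" and "V \<ge> 0"
    and "- (real d / 2) < \<tau> 0"
    and "\<And>i j. i < j \<Longrightarrow> j < n \<Longrightarrow> \<tau> i < \<tau> j"
  shows "let x = (\<lambda>i. \<tau> i + real d / 2);
             \<kappa> = unit_ball_vol (real d);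
             Q = (\<Sum>l<n. \<Sum>k<n. real n / (x k + x l)\<^sup>2) - (\<Sum>i<n. 1 / (2 * x i))\<^sup>2;
             S_up = V * real d * \<kappa> * ((\<Sum>i<n. 1 / (2 * x i)) + sqrt ((real n - 1) * Q)) / (2 * real n);
             S_low = V * real d * \<kappa> * (\<Prod>j<n. \<Prod>i<j. (x i - x j)\<^sup>2)
                / (2 * (\<Prod>i<n. \<Prod>j<n. x i + x j)
                   * (((\<Sum>i<n. sqrt (real n - 1) / (2 * x i)) + sqrt Q) / (real n * sqrt (real n - 1))) ^ (n - 1))
         in \<forall>\<mu>. eigenvalue (Sigma_mat d n V \<tau>) \<mu> \<longrightarrow> S_low \<le> \<mu> \<and> \<mu> \<le> S_up"
proof -
  have xp: "0 < \<tau> i + real d / 2" if i: "i < n" for i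
  proof (cases "i = 0")
    case True then show ?thesis using assms(4) by simp
  next
    case False then have "\<tau> 0 < \<tau> i" using assms(5)[of 0 i] i by simp
    then show ?thesis using assms(4) by simp
  qed
  have K: "0 \<le> V * real d * unit_ball_vol (real d)" using assms(3) by simp
  show ?thesis
    unfolding Let_def
    apply (intro allI impI)
    apply (rule main[where x = "\<lambda>i. \<tau> i + real d / 2", OF assms(2) K xp])
     apply assumption
    apply (simp add: Sigma_mat_def)
    done
qed

end
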